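(* Let $L\subseteq B_i$ be an SINR-feasible set of links in a bucket $B_i$, let $e\in B_i$, and let $L^g=\{e'\in L:d_{e'}>d_{e'e}\}$. Then $\sum_{e'\in L^g}\bar a_{e'}(e)\le C$ for a constant $C$ depending only on $\alpha,\beta,\varepsilon$.
   Context: Constants: $\alpha\ge0$, $N>0$, $\beta>0$. Nodes lie in the Euclidean plane. A link is $e=(s_e,r_e,P_e)$; $\mathcal{L}$ is the set of links. $d_e=d(s_e,r_e)$, $d_{e'e}=d(s_{e'},r_e)$, $S_e=P_e/d_e^\alpha$, $S_{e'e}=P_{e'}/d_{e'e}^\alpha$, $\gamma_e=\beta S_e/(S_e-\beta N)$, $\hat a_{e'}(e)=S_{e'e}/S_e$, $a_{e'}(e)=\gamma_e\hat a_{e'}(e)$, $\bar a_{e'}(e)=\min\{1,a_{e'}(e)\}$. $L$ is SINR-feasible if $S_e/(N+\sum_{e'\in L\setminus\{e\}}S_{e'e})\ge\beta$ for all $e\in L$. Buckets: $S_{\min}=\min_{e\in\mathcal{L}}S_e$, $B_i=\{e\in\mathcal{L}:2^iS_{\min}\le S_e<2^{i+1}S_{\min}\}$. Standing assumption: there is a constant $\varepsilon>0$ with $S_e/N\ge(1+\varepsilon)\beta$ for all $e\in\mathcal{L}$. *)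

theory Defs
  imports "HOL-Analysis.Analysis"
begin

type_synonym point = "real ^ 2"
type_synonym link = "point \<times> point \<times> real"

definition sender :: "link \<Rightarrow> point" where "sender e = fst e"
definition receiver :: "link \<Rightarrow> point" where "receiver e = fst (snd e)"
definition power :: "link \<Rightarrow> real" where "power e = snd (snd e)"

definition dl :: "link \<Rightarrow> real" where "dl e = dist (sender e) (receiver e)"
definition dx :: "link \<Rightarrow> link \<Rightarrow> real" where "dx e' e = dist (sender e') (receiver e)"

definition Sig :: "real \<Rightarrow> link \<Rightarrow> real" where
  "Sig \<alpha> e = power e / (dl e powr \<alpha>)"
definition Sx :: "real \<Rightarrow> link \<Rightarrow> link \<Rightarrow> real" where
  "Sx \<alpha> e' e = power e' / (dx e' e powr \<alpha>)"

definition gam :: "real \<Rightarrow> real \<Rightarrow> real \<Rightarrow> link \<Rightarrow> real" where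
  "gam \<alpha> \<beta> N e = \<beta> * Sig \<alpha> e / (Sig \<alpha> e - \<beta> * N)"

definition ahat :: "real \<Rightarrow> link \<Rightarrow> link \<Rightarrow> real" where
  "ahat \<alpha> e' e = Sx \<alpha> e' e / Sig \<alpha> e"

definition aff :: "real \<Rightarrow> real \<Rightarrow> real \<Rightarrow> link \<Rightarrow> link \<Rightarrow> real" where
  "aff \<alpha> \<beta> N e' e = gam \<alpha> \<beta> N e * ahat \<alpha> e' e"

definition abar :: "real \<Rightarrow> real \<Rightarrow> real \<Rightarrow> link \<Rightarrow> link \<Rightarrow> real" where
  "abar \<alpha> \<beta> N e' e = min 1 (aff \<alpha> \<beta> N e' e)"

definition sinr_feasible :: "real \<Rightarrow> real \<Rightarrow> real \<Rightarrow> link set \<Rightarrow> bool" where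
  "sinr_feasible \<alpha> \<beta> N L \<longleftrightarrow>
     (\<forall>e\<in>L. Sig \<alpha> e / (N + (\<Sum>e'\<in>L - {e}. Sx \<alpha> e' e)) \<ge> \<beta>)"

definition Smin :: "real \<Rightarrow> link set \<Rightarrow> real" where
  "Smin \<alpha> Ls = Min (Sig \<alpha> ` Ls)"

definition bucket :: "real \<Rightarrow> link set \<Rightarrow> nat \<Rightarrow> link set" where
  "bucket \<alpha> Ls i = {e\<in>Ls. 2 ^ i * Smin \<alpha> Ls \<le> Sig \<alpha> e \<and> Sig \<alpha> e < 2 ^ (i + 1) * Smin \<alpha> Ls}"

end

theory Submission
  imports Defs
begin

lemma main4:
  fixes \<alpha> \<beta> \<epsilon> N :: real
  assumes a0: "\<alpha> \<ge> 0" and b0: "\<beta> > 0" and e0: "\<epsilon> > 0" and N0: "N > 0"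
    and fin: "finite Ls"
    and sig: "\<forall>f\<in>Ls. Sig \<alpha> f / N \<ge> (1 + \<epsilon>) * \<beta>"
    and nc: "\<forall>f\<in>Ls. \<forall>f'\<in>Ls. sender f' \<noteq> receiver f"
    and LB: "L \<subseteq> bucket \<alpha> Ls i" and feas: "sinr_feasible \<alpha> \<beta> N L"
    and eB: "e \<in> bucket \<alpha> Ls i"
  shows "(\<Sum>e'\<in>{e'\<in>L. dl e' > dx e' e}. abar \<alpha> \<beta> N e' e) \<le> 1 + 2 * 3 powr \<alpha> / \<beta>"
proof -
  define G where "G = {e'\<in>L. dl e' > dx e' e}"
  have LLs: "L \<subseteq> Ls" using LB by (auto simp: bucket_def)
  have eLs: "e \<in> Ls" using eB by (auto simp: bucket_def)
  have finL: "finite L" using LLs fin finite_subset by blast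
  have finG: "finite G" unfolding G_def using finL by simp
  have GL: "G \<subseteq> L" unfolding G_def by auto
  have sigpos: "Sig \<alpha> f > 0" if "f \<in> Ls" for f
  proof -
    have "(1 + \<epsilon>) * \<beta> > 0" using e0 b0 by simp
    hence "Sig \<alpha> f / N > 0" using sig that by fastforce
    thus ?thesis using N0 by (simp add: zero_less_divide_iff)
  qed
  have dlpos: "dl f > 0" and powpos: "power f > 0" if "f \<in> Ls" for f
  proof -
    have s: "power f / (dl f powr \<alpha>) > 0" using sigpos[OF that] by (simp add: Sig_def)
    have "dl f \<noteq> 0" proof
      assume "dl f = 0" thus False using s by simp
    qed
    moreover have "dl f \<ge> 0" by (simp add: dl_def)
    ultimately show "dl f > 0" by simp
    hence "dl f powr \<alpha> > 0" by simp
    thus "power f > 0" using s by (simp add: zero_less_divide_iff)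
  qed
  have dxpos: "dx f' f > 0" if "f \<in> Ls" "f' \<in> Ls" for f f'
    using nc that by (simp add: dx_def)
  have Sxnn: "Sx \<alpha> f' f \<ge> 0" if "f \<in> Ls" "f' \<in> Ls" for f f'
    using powpos[OF that(2)] by (simp add: Sx_def)
  have s1: "(\<Sum>e'\<in>G. abar \<alpha> \<beta> N e' e) \<le> real (card G)"
    using sum_bounded_above[of G "\<lambda>e'. abar \<alpha> \<beta> N e' e" 1]
    by (simp add: abar_def)
  have c3: "3 powr \<alpha> > 0" by simp
  have cG: "real (card G) \<le> 1 + 2 * 3 powr \<alpha> / \<beta>"
  proof (cases "G = {}")
    case True thus ?thesis using c3 b0 by simp
  next
    case False
    obtain e1 where e1G: "e1 \<in> G" and e1min: "\<forall>e2\<in>G. dl e1 \<le> dl e2"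
    proof -
      have "Min (dl ` G) \<in> dl ` G" using finG False by (intro Min_in) auto
      then obtain e1 where "e1 \<in> G" "dl e1 = Min (dl ` G)" by (metis imageE)
      moreover have "\<forall>e2\<in>G. Min (dl ` G) \<le> dl e2" using finG by simp
      ultimately show ?thesis using that by auto
    qed
    have e1L: "e1 \<in> L" using e1G GL by auto
    have e1Ls: "e1 \<in> Ls" using e1L LLs by auto
    have S1pos: "Sig \<alpha> e1 > 0" using sigpos e1Ls by simp
    have key: "Sx \<alpha> e2 e1 \<ge> Sig \<alpha> e1 / (2 * 3 powr \<alpha>)" if e2G: "e2 \<in> G" for e2
    proof -
      have e2L: "e2 \<in> L" using e2G GL by auto
      have e2Ls: "e2 \<in> Ls" using e2L LLs by auto
      have t: "dx e2 e1 \<le> dx e2 e + dx e1 e + dl e1"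
        unfolding dx_def dl_def
      proof -
        have "dist (sender e2) (receiver e1) \<le> dist (sender e2) (receiver e) + dist (receiver e) (receiver e1)"
          by (rule dist_triangle)
        moreover have "dist (receiver e) (receiver e1) \<le> dist (receiver e) (sender e1) + dist (sender e1) (receiver e1)"
          by (rule dist_triangle)
        moreover have "dist (receiver e) (sender e1) = dist (sender e1) (receiver e)" by (rule dist_commute)
        ultimately show "dist (sender e2) (receiver e1) \<le> dist (sender e2) (receiver e) + dist (sender e1) (receiver e) + dist (sender e1) (receiver e1)"
          by linarith
      qed
      have "dx e2 e < dl e2" using e2G by (simp add: G_def)
      moreover have "dx e1 e < dl e1" using e1G by (simp add: G_def)
      moreover have "dl e1 \<le> dl e2" using e1min e2G by auto
      ultimately have dxle: "dx e2 e1 \<le> 3 * dl e2" using t by linarith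
      have dxp: "dx e2 e1 > 0" using dxpos e1Ls e2Ls by simp
      have "dx e2 e1 powr \<alpha> \<le> (3 * dl e2) powr \<alpha>"
        using powr_mono2[OF a0 _ dxle] dxp by simp
      also have "\<dots> = 3 powr \<alpha> * dl e2 powr \<alpha>"
        using dlpos[OF e2Ls] by (simp add: powr_mult)
      finally have pw: "dx e2 e1 powr \<alpha> \<le> 3 powr \<alpha> * dl e2 powr \<alpha>" .
      have dlp: "dl e2 powr \<alpha> > 0" using dlpos[OF e2Ls] by simp
      have P2: "power e2 > 0" using powpos[OF e2Ls] .
      have "Sig \<alpha> e2 / 3 powr \<alpha> = power e2 / (3 powr \<alpha> * dl e2 powr \<alpha>)"
        by (simp add: Sig_def)
      also have "\<dots> \<le> power e2 / (dx e2 e1 powr \<alpha>)"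
        using pw P2 dxp dlp c3 by (intro divide_left_mono) auto
      finally have A: "Sig \<alpha> e2 / 3 powr \<alpha> \<le> Sx \<alpha> e2 e1" by (simp add: Sx_def)
      have "Sig \<alpha> e1 < 2 ^ (i+1) * Smin \<alpha> Ls" using e1L LB by (auto simp: bucket_def)
      moreover have "2 ^ i * Smin \<alpha> Ls \<le> Sig \<alpha> e2" using e2L LB by (auto simp: bucket_def)
      ultimately have "Sig \<alpha> e1 \<le> 2 * Sig \<alpha> e2" by simp
      hence "Sig \<alpha> e1 / (2 * 3 powr \<alpha>) \<le> Sig \<alpha> e2 / 3 powr \<alpha>"
        using c3 by (simp add: field_simps)
      thus ?thesis using A by linarith
    qed
    have "(\<Sum>e2\<in>G-{e1}. Sig \<alpha> e1 / (2 * 3 powr \<alpha>)) \<le> (\<Sum>e2\<in>G-{e1}. Sx \<alpha> e2 e1)"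
      using key by (intro sum_mono) auto
    hence B: "(real (card G) - 1) * (Sig \<alpha> e1 / (2 * 3 powr \<alpha>)) \<le> (\<Sum>e2\<in>G-{e1}. Sx \<alpha> e2 e1)"
    proof -
      have cg: "card G \<ge> 1" using finG e1G by (metis One_nat_def Suc_leI card_gt_0_iff empty_iff)
      have "real (card (G - {e1})) = real (card G) - 1"
        using finG e1G cg by (simp add: card_Diff_singleton of_nat_diff)
      thus ?thesis using \<open>(\<Sum>e2\<in>G-{e1}. Sig \<alpha> e1 / (2 * 3 powr \<alpha>)) \<le> (\<Sum>e2\<in>G-{e1}. Sx \<alpha> e2 e1)\<close>
        by simp
    qed
    have C: "(\<Sum>e2\<in>G-{e1}. Sx \<alpha> e2 e1) \<le> (\<Sum>e2\<in>L-{e1}. Sx \<alpha> e2 e1)"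
      using finL GL Sxnn e1Ls LLs by (intro sum_mono2; blast)
    have Dnn: "(\<Sum>e2\<in>L-{e1}. Sx \<alpha> e2 e1) \<ge> 0"
      using Sxnn e1Ls LLs by (intro sum_nonneg) blast
    have "Sig \<alpha> e1 / (N + (\<Sum>e2\<in>L-{e1}. Sx \<alpha> e2 e1)) \<ge> \<beta>"
      using feas e1L by (simp add: sinr_feasible_def)
    hence D: "Sig \<alpha> e1 \<ge> \<beta> * (N + (\<Sum>e2\<in>L-{e1}. Sx \<alpha> e2 e1))"
      using Dnn N0 by (simp add: le_divide_eq)
    have "\<beta> * ((real (card G) - 1) * (Sig \<alpha> e1 / (2 * 3 powr \<alpha>))) \<le> Sig \<alpha> e1"
    proof -
      have "\<beta> * ((real (card G) - 1) * (Sig \<alpha> e1 / (2 * 3 powr \<alpha>)))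
            \<le> \<beta> * (N + (\<Sum>e2\<in>L-{e1}. Sx \<alpha> e2 e1))"
        using B C N0 b0 by (intro mult_left_mono) auto
      thus ?thesis using D by linarith
    qed
    hence "(\<beta> * (real (card G) - 1) / (2 * 3 powr \<alpha>)) * Sig \<alpha> e1 \<le> 1 * Sig \<alpha> e1"
      by (simp add: algebra_simps)
    hence "\<beta> * (real (card G) - 1) / (2 * 3 powr \<alpha>) \<le> 1"
      using S1pos mult_le_cancel_right_pos by blast
    hence "\<beta> * (real (card G) - 1) \<le> 2 * 3 powr \<alpha>" using c3 by (simp add: field_simps)
    hence "real (card G) - 1 \<le> 2 * 3 powr \<alpha> / \<beta>" using b0 by (simp add: field_simps)
    thus ?thesis by linarith
  qed
  show ?thesis using s1 cG by (simp add: G_def)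
qed

theorem lemma4:
  fixes \<alpha> \<beta> \<epsilon> :: real
  assumes "\<alpha> \<ge> 0" and "\<beta> > 0" and "\<epsilon> > 0"
  shows "\<exists>C::real. \<forall>(N::real) (Ls::link set) (i::nat) (L::link set) (e::link).
           N > 0 \<and> finite Ls
         \<and> (\<forall>f\<in>Ls. Sig \<alpha> f / N \<ge> (1 + \<epsilon>) * \<beta>)
         \<and> (\<forall>f\<in>Ls. \<forall>f'\<in>Ls. sender f' \<noteq> receiver f)
         \<and> L \<subseteq> bucket \<alpha> Ls i \<and> sinr_feasible \<alpha> \<beta> N L \<and> e \<in> bucket \<alpha> Ls i
         \<longrightarrow> (\<Sum>e'\<in>{e'\<in>L. dl e' > dx e' e}. abar \<alpha> \<beta> N e' e) \<le> C"
  using main4[OF assms(1,2,3)] by blast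

end
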